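(* Let $C^*,C_1,C_2>0$. Let $\underline{\boldsymbol m}_h^{(1)},\underline{\boldsymbol m}_h^{(2)}\in\boldsymbol X$ with $|\underline{\boldsymbol m}_h^{(q)}|=1$ pointwise and $\|\underline{\boldsymbol m}_h^{(q)}\|_\infty+\|\nabla_h\underline{\boldsymbol m}_h^{(q)}\|_\infty\le C^*$, $q=1,2$. Let $\tilde{\boldsymbol m}_h^{(1)},\tilde{\boldsymbol m}_h^{(2)}\in\boldsymbol X$, set $\boldsymbol m_h^{(q)}=\tilde{\boldsymbol m}_h^{(q)}/|\tilde{\boldsymbol m}_h^{(q)}|$, $\boldsymbol e_h^{(q)}=\underline{\boldsymbol m}_h^{(q)}-\boldsymbol m_h^{(q)}$, $\tilde{\boldsymbol e}_h^{(q)}=\underline{\boldsymbol m}_h^{(q)}-\tilde{\boldsymbol m}_h^{(q)}$. Suppose $C_1h\le k\le C_2h$, $$\|\tilde{\boldsymbol e}_h^{(q)}\|_2\le2k^{15/8},\quad\|\nabla_h\tilde{\boldsymbol e}_h^{(q)}\|_2\le\tfrac12k^{11/8}\ (q=1,2),\qquad\|\underline{\boldsymbol m}_h^{(1)}-\underline{\boldsymbol m}_h^{(2)}\|_\infty\le\tfrac14k^{7/8}.$$ Then, for $k$ and $h$ sufficiently small, $$\big|\langle\tilde{\boldsymbol e}_h^{(1)}-\boldsymbol e_h^{(1)},\boldsymbol e_h^{(2)}\rangle\big|\le k^{5/4}\|\boldsymbol e_h^{(2)}\|_2^2+k^{1/4}\|\tilde{\boldsymbol e}_h^{(1)}-\boldsymbol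 e_h^{(1)}\|_2^2.$$
   Context: $\Omega=[0,1]^3$, $h=1/N$, cell-centered grid points $((i-\tfrac12)h,(j-\tfrac12)h,(\ell-\tfrac12)h)$, $0\le i,j,\ell\le N+1$, interior points $\Omega_h^0$ those with $1\le i,j,\ell\le N$. $\boldsymbol X$ is the space of $\mathbb R^3$-valued grid functions satisfying the discrete Neumann condition $\boldsymbol m_{0,j,\ell}=\boldsymbol m_{1,j,\ell}$, $\boldsymbol m_{N+1,j,\ell}=\boldsymbol m_{N,j,\ell}$ (and analogously in $j,\ell$). Forward differences $D_xf_{i,j,\ell}=(f_{i+1,j,\ell}-f_{i,j,\ell})/h$ (similarly $D_y,D_z$); $\nabla_h$ collects all forward differences. $\langle\boldsymbol f,\boldsymbol g\rangle=h^3\sum_{\Omega_h^0}\boldsymbol f\cdot\boldsymbol g$, $\|\boldsymbol f\|_2=\langle\boldsymbol f,\boldsymbol f\rangle^{1/2}$, $\|\boldsymbol f\|_\infty=\max_{\Omega_h^0}|\boldsymbol f|$, and $\|\nabla_h\boldsymbol f\|_2,\|\nabla_h\boldsymbol f\|_\infty$ are the analogous discrete norms of the difference quotients. *)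

theory Defs
  imports "HOL-Analysis.Analysis"
begin

text \<open>Grid functions on the cell-centred grid: indices (i,j,l) with 0 \<le> i,j,l \<le> N+1,
  values in R^3. Values at indices beyond N+1 are irrelevant.\<close>
type_synonym gridfun = "nat \<Rightarrow> nat \<Rightarrow> nat \<Rightarrow> real^3"

definition interior :: "nat \<Rightarrow> (nat \<times> nat \<times> nat) set" where
  "interior N = {1..N} \<times> {1..N} \<times> {1..N}"

definition allpts :: "nat \<Rightarrow> (nat \<times> nat \<times> nat) set" where
  "allpts N = {0..N+1} \<times> {0..N+1} \<times> {0..N+1}"

definition inX :: "nat \<Rightarrow> gridfun \<Rightarrow> bool" where
  "inX N m \<longleftrightarrow>
     (\<forall>j\<le>N+1. \<forall>l\<le>N+1. m 0 j l = m 1 j l \<and> m (N+1) j l = m N j l) \<and>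
     (\<forall>i\<le>N+1. \<forall>l\<le>N+1. m i 0 l = m i 1 l \<and> m i (N+1) l = m i N l) \<and>
     (\<forall>i\<le>N+1. \<forall>j\<le>N+1. m i j 0 = m i j 1 \<and> m i j (N+1) = m i j N)"

definition meshsize :: "nat \<Rightarrow> real" where
  "meshsize N = 1 / real N"

definition Dx :: "nat \<Rightarrow> gridfun \<Rightarrow> gridfun" where
  "Dx N f i j l = (f (i+1) j l - f i j l) /\<^sub>R meshsize N"
definition Dy :: "nat \<Rightarrow> gridfun \<Rightarrow> gridfun" where
  "Dy N f i j l = (f i (j+1) l - f i j l) /\<^sub>R meshsize N"
definition Dz :: "nat \<Rightarrow> gridfun \<Rightarrow> gridfun" where
  "Dz N f i j l = (f i j (l+1) - f i j l) /\<^sub>R meshsize N"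

definition ginner :: "nat \<Rightarrow> gridfun \<Rightarrow> gridfun \<Rightarrow> real" where
  "ginner N f g = (meshsize N)^3 * (\<Sum>(i,j,l)\<in>interior N. f i j l \<bullet> g i j l)"

definition norm2 :: "nat \<Rightarrow> gridfun \<Rightarrow> real" where
  "norm2 N f = sqrt (ginner N f f)"

definition gradnorm2 :: "nat \<Rightarrow> gridfun \<Rightarrow> real" where
  "gradnorm2 N f = sqrt ((meshsize N)^3 * (\<Sum>(i,j,l)\<in>interior N.
      (norm (Dx N f i j l))^2 + (norm (Dy N f i j l))^2 + (norm (Dz N f i j l))^2))"

definition norminf :: "nat \<Rightarrow> gridfun \<Rightarrow> real" where
  "norminf N f = Max ((\<lambda>(i,j,l). norm (f i j l)) ` interior N)"

definition gradnorminf :: "nat \<Rightarrow> gridfun \<Rightarrow> real" where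
  "gradnorminf N f = Max ((\<lambda>(i,j,l). sqrt ((norm (Dx N f i j l))^2
      + (norm (Dy N f i j l))^2 + (norm (Dz N f i j l))^2)) ` interior N)"

definition normalize :: "gridfun \<Rightarrow> gridfun" where
  "normalize m i j l = m i j l /\<^sub>R norm (m i j l)"

end

theory Submission
  imports Defs
begin

lemma path1:
  fixes g :: "nat \<Rightarrow> 'a::real_normed_vector"
  assumes "x \<le> y"
  shows "norm (g y - g x) \<le> (\<Sum>t\<in>{x..<y}. norm (g (t+1) - g t))"
  using assms
proof (induction y rule: dec_induct)
  case base then show ?case by simp
next
  case (step n)
  have "norm (g (Suc n) - g x) \<le> norm (g (Suc n) - g n) + norm (g n - g x)"
    using norm_triangle_ineq[of "g (Suc n) - g n" "g n - g x"] by simp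
  also have "\<dots> \<le> norm (g (Suc n) - g n) + (\<Sum>t\<in>{x..<n}. norm (g (t+1) - g t))"
    using step by simp
  finally show ?case using step by (simp add: sum.atLeastLessThan_Suc add.commute)
qed

lemma path_box:
  fixes g :: "nat \<Rightarrow> 'a::real_normed_vector"
  assumes "x \<in> {b..<b+S}" "y \<in> {b..<b+S}"
  shows "norm (g x - g y) \<le> (\<Sum>t\<in>{b..<b+S}. norm (g (t+1) - g t))"
proof -
  have gen: "norm (g v - g u) \<le> (\<Sum>t\<in>{b..<b+S}. norm (g (t+1) - g t))"
    if "u \<le> v" "u \<in> {b..<b+S}" "v \<in> {b..<b+S}" for u v
  proof -
    have "norm (g v - g u) \<le> (\<Sum>t\<in>{u..<v}. norm (g (t+1) - g t))" using path1 that by blast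
    also have "\<dots> \<le> (\<Sum>t\<in>{b..<b+S}. norm (g (t+1) - g t))"
      by (rule sum_mono2) (use that in auto)
    finally show ?thesis .
  qed
  show ?thesis
  proof (cases "x \<le> y")
    case True then show ?thesis using gen[of x y] assms by (simp add: norm_minus_commute)
  next
    case False then show ?thesis using gen[of y x] assms by simp
  qed
qed

lemma sum_le_sqrt_card:
  fixes g :: "'a \<Rightarrow> real"
  assumes "finite Q" "P \<subseteq> Q" "\<And>p. p \<in> Q \<Longrightarrow> g p \<ge> 0"
  shows "(\<Sum>p\<in>P. g p) \<le> sqrt (card P) * sqrt (\<Sum>p\<in>Q. (g p)^2)"
proof -
  have fP: "finite P" using assms finite_subset by blast
  have "(\<Sum>p\<in>P. g p)^2 \<le> (\<Sum>p\<in>P. (g p)^2) * card P" by (rule sum_squared_le_sum_of_squares)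
  also have "\<dots> \<le> (\<Sum>p\<in>Q. (g p)^2) * card P"
    by (intro mult_right_mono sum_mono2) (use assms in auto)
  finally have "(\<Sum>p\<in>P. g p) \<le> sqrt ((\<Sum>p\<in>Q. (g p)^2) * card P)"
    by (simp add: real_le_rsqrt)
  then show ?thesis by (simp add: real_sqrt_mult mult.commute)
qed

lemma sum3: "(\<Sum>(i,j,l)\<in>A\<times>B\<times>C. g i j l) = (\<Sum>i\<in>A. \<Sum>j\<in>B. \<Sum>l\<in>C. g i j l)"
proof -
  have "(\<Sum>i\<in>A. \<Sum>j\<in>B. \<Sum>l\<in>C. g i j l) = (\<Sum>i\<in>A. \<Sum>(j,l)\<in>B\<times>C. g i j l)"
    by (simp add: sum.cartesian_product)
  also have "\<dots> = (\<Sum>(i,jl)\<in>A\<times>(B\<times>C). (case jl of (j,l) \<Rightarrow> g i j l))"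
    by (simp add: sum.cartesian_product)
  finally show ?thesis by (simp add: case_prod_beta)
qed


lemma avg_diff:
  fixes F :: "'a \<Rightarrow> real^3"
  assumes "finite A" "finite B" "A \<noteq> {}" "B \<noteq> {}"
  shows "norm ((1 / real (card A)) *\<^sub>R sum F A - (1 / real (card B)) *\<^sub>R sum F B)
     \<le> (\<Sum>a\<in>A. \<Sum>b\<in>B. norm (F a - F b)) / (real (card A) * real (card B))"
proof -
  have cA: "real (card A) > 0" and cB: "real (card B) > 0" using assms by auto
  have eq: "(\<Sum>a\<in>A. \<Sum>b\<in>B. (F a - F b)) = real (card B) *\<^sub>R sum F A - real (card A) *\<^sub>R sum F B"
  proof -
    have "(\<Sum>a\<in>A. \<Sum>b\<in>B. (F a - F b)) = (\<Sum>a\<in>A. real (card B) *\<^sub>R F a - sum F B)"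
      by (simp only: sum_subtractf sum_constant_scaleR)
    also have "\<dots> = real (card B) *\<^sub>R sum F A - real (card A) *\<^sub>R sum F B"
      by (simp only: sum_subtractf scaleR_sum_right sum_constant_scaleR)
    finally show ?thesis .
  qed
  have "(1 / real (card A)) *\<^sub>R sum F A - (1 / real (card B)) *\<^sub>R sum F B
     = (1 / (real (card A) * real (card B))) *\<^sub>R (\<Sum>a\<in>A. \<Sum>b\<in>B. (F a - F b))"
    unfolding eq using cA cB by (simp add: scaleR_diff_right field_simps)
  then have "norm ((1 / real (card A)) *\<^sub>R sum F A - (1 / real (card B)) *\<^sub>R sum F B)
     = norm (\<Sum>a\<in>A. \<Sum>b\<in>B. (F a - F b)) / (real (card A) * real (card B))"
    using cA cB by (simp add: divide_inverse mult.commute)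
  also have "\<dots> \<le> (\<Sum>a\<in>A. \<Sum>b\<in>B. norm (F a - F b)) / (real (card A) * real (card B))"
  proof (rule divide_right_mono)
    have "norm (\<Sum>a\<in>A. \<Sum>b\<in>B. (F a - F b)) \<le> (\<Sum>a\<in>A. norm (\<Sum>b\<in>B. (F a - F b)))"
      by (rule norm_sum)
    also have "\<dots> \<le> (\<Sum>a\<in>A. \<Sum>b\<in>B. norm (F a - F b))"
      by (intro sum_mono norm_sum)
    finally show "norm (\<Sum>a\<in>A. \<Sum>b\<in>B. (F a - F b)) \<le> (\<Sum>a\<in>A. \<Sum>b\<in>B. norm (F a - F b))" .
  qed (use cA cB in simp)
  finally show ?thesis .
qed

lemma leg:
  fixes f :: gridfun
  assumes "x1 \<in> {b1..<b1+S}" "y1 \<in> {b1..<b1+S}" "x2 \<in> {b2..<b2+S}" "y2 \<in> {b2..<b2+S}"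
          "x3 \<in> {b3..<b3+S}" "y3 \<in> {b3..<b3+S}"
  shows "norm (f x1 x2 x3 - f y1 y2 y3) \<le>
     (\<Sum>t\<in>{b1..<b1+S}. norm (f (t+1) y2 y3 - f t y2 y3)) +
     (\<Sum>t\<in>{b2..<b2+S}. norm (f x1 (t+1) y3 - f x1 t y3)) +
     (\<Sum>t\<in>{b3..<b3+S}. norm (f x1 x2 (t+1) - f x1 x2 t))"
proof -
  have 1: "norm (f x1 y2 y3 - f y1 y2 y3) \<le> (\<Sum>t\<in>{b1..<b1+S}. norm (f (t+1) y2 y3 - f t y2 y3))"
    using path_box[of x1 b1 S y1 "\<lambda>t. f t y2 y3"] assms by simp
  have 2: "norm (f x1 x2 y3 - f x1 y2 y3) \<le> (\<Sum>t\<in>{b2..<b2+S}. norm (f x1 (t+1) y3 - f x1 t y3))"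
    using path_box[of x2 b2 S y2 "\<lambda>t. f x1 t y3"] assms by simp
  have 3: "norm (f x1 x2 x3 - f x1 x2 y3) \<le> (\<Sum>t\<in>{b3..<b3+S}. norm (f x1 x2 (t+1) - f x1 x2 t))"
    using path_box[of x3 b3 S y3 "\<lambda>t. f x1 x2 t"] assms by simp
  have "norm (f x1 x2 x3 - f y1 y2 y3) \<le> norm (f x1 x2 x3 - f x1 x2 y3) + norm (f x1 x2 y3 - f x1 y2 y3)
       + norm (f x1 y2 y3 - f y1 y2 y3)"
    using norm_triangle_ineq[of "f x1 x2 x3 - f x1 x2 y3" "f x1 x2 y3 - f x1 y2 y3"]
          norm_triangle_ineq[of "f x1 x2 x3 - f x1 y2 y3" "f x1 y2 y3 - f y1 y2 y3"]
    by simp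
  then show ?thesis using 1 2 3 by linarith
qed


lemma sum6:
  fixes P :: "nat \<Rightarrow> nat \<Rightarrow> real"
  assumes cJ: "card J1 = s" "card J2 = s" "card J3 = s" and cI: "card I1 = S" "card I2 = S" "card I3 = S"
  shows "(\<Sum>x1\<in>J1. \<Sum>x2\<in>J2. \<Sum>x3\<in>J3. \<Sum>y1\<in>I1. \<Sum>y2\<in>I2. \<Sum>y3\<in>I3. P y2 y3 + Q x1 y3 + R x1 x2)
     = s * s * s * S * (\<Sum>y2\<in>I2. \<Sum>y3\<in>I3. P y2 y3) + s * s * S * S * (\<Sum>x1\<in>J1. \<Sum>y3\<in>I3. Q x1 y3)
       + s * S * S * S * (\<Sum>x1\<in>J1. \<Sum>x2\<in>J2. R x1 x2)"
proof -
  have 1: "(\<Sum>x1\<in>J1. \<Sum>x2\<in>J2. \<Sum>x3\<in>J3. \<Sum>y1\<in>I1. \<Sum>y2\<in>I2. \<Sum>y3\<in>I3. P y2 y3) = s * s * s * S * (\<Sum>y2\<in>I2. \<Sum>y3\<in>I3. P y2 y3)"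
    using cJ cI by (simp add: mult.assoc)
  have 2: "(\<Sum>x1\<in>J1. \<Sum>x2\<in>J2. \<Sum>x3\<in>J3. \<Sum>y1\<in>I1. \<Sum>y2\<in>I2. \<Sum>y3\<in>I3. Q x1 y3) = s * s * S * S * (\<Sum>x1\<in>J1. \<Sum>y3\<in>I3. Q x1 y3)"
    using cJ cI by (simp add: sum_distrib_left mult.assoc mult.left_commute)
  have 3: "(\<Sum>x1\<in>J1. \<Sum>x2\<in>J2. \<Sum>x3\<in>J3. \<Sum>y1\<in>I1. \<Sum>y2\<in>I2. \<Sum>y3\<in>I3. R x1 x2) = s * S * S * S * (\<Sum>x1\<in>J1. \<Sum>x2\<in>J2. R x1 x2)"
    using cJ cI by (simp add: sum_distrib_left mult.assoc mult.left_commute)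
  have "(\<Sum>x1\<in>J1. \<Sum>x2\<in>J2. \<Sum>x3\<in>J3. \<Sum>y1\<in>I1. \<Sum>y2\<in>I2. \<Sum>y3\<in>I3. P y2 y3 + Q x1 y3 + R x1 x2) =
    (\<Sum>x1\<in>J1. \<Sum>x2\<in>J2. \<Sum>x3\<in>J3. \<Sum>y1\<in>I1. \<Sum>y2\<in>I2. \<Sum>y3\<in>I3. P y2 y3) +
    (\<Sum>x1\<in>J1. \<Sum>x2\<in>J2. \<Sum>x3\<in>J3. \<Sum>y1\<in>I1. \<Sum>y2\<in>I2. \<Sum>y3\<in>I3. Q x1 y3) +
    (\<Sum>x1\<in>J1. \<Sum>x2\<in>J2. \<Sum>x3\<in>J3. \<Sum>y1\<in>I1. \<Sum>y2\<in>I2. \<Sum>y3\<in>I3. R x1 x2)"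
    by (simp only: sum.distrib)
  then show ?thesis unfolding 1 2 3 by simp
qed

definition EE :: "nat \<Rightarrow> gridfun \<Rightarrow> real" where
  "EE N f = (\<Sum>(i,j,l)\<in>interior N. (norm (f (i+1) j l - f i j l))^2 + (norm (f i (j+1) l - f i j l))^2
      + (norm (f i j (l+1) - f i j l))^2)"

definition avg :: "(nat \<times> nat \<times> nat) set \<Rightarrow> gridfun \<Rightarrow> real^3" where
  "avg A f = (1 / real (card A)) *\<^sub>R (\<Sum>(i,j,l)\<in>A. f i j l)"

lemma cs_piece:
  fixes g :: "nat \<Rightarrow> nat \<Rightarrow> nat \<Rightarrow> real"
  assumes "A \<times> B \<times> C \<subseteq> interior N" "\<And>i j l. g i j l \<ge> 0"
  shows "(\<Sum>i\<in>A. \<Sum>j\<in>B. \<Sum>l\<in>C. g i j l) \<le> sqrt (card A * card B * card C) *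
     sqrt (\<Sum>(i,j,l)\<in>interior N. (g i j l)^2)"
proof -
  have "(\<Sum>i\<in>A. \<Sum>j\<in>B. \<Sum>l\<in>C. g i j l) = (\<Sum>p\<in>A \<times> B \<times> C. (\<lambda>(i,j,l). g i j l) p)"
    by (simp add: sum3)
  also have "\<dots> \<le> sqrt (card (A \<times> B \<times> C)) * sqrt (\<Sum>p\<in>interior N. ((\<lambda>(i,j,l). g i j l) p)^2)"
    by (rule sum_le_sqrt_card) (use assms in \<open>auto simp: interior_def\<close>)
  also have "\<dots> = sqrt (card A * card B * card C) * sqrt (\<Sum>(i,j,l)\<in>interior N. (g i j l)^2)"
    by (simp add: card_cartesian_product case_prod_beta mult.assoc)
  finally show ?thesis .
qed

lemma EE_nonneg: "EE N f \<ge> 0"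
  unfolding EE_def by (auto intro!: sum_nonneg simp: case_prod_beta)

lemma EE_ge:
  "(\<Sum>(i,j,l)\<in>interior N. (norm (f (i+1) j l - f i j l))^2) \<le> EE N f"
  "(\<Sum>(i,j,l)\<in>interior N. (norm (f i (j+1) l - f i j l))^2) \<le> EE N f"
  "(\<Sum>(i,j,l)\<in>interior N. (norm (f i j (l+1) - f i j l))^2) \<le> EE N f"
  unfolding EE_def by (auto intro!: sum_mono simp: case_prod_beta)


lemma coeff_eq:
  fixes s S :: real
  assumes "s > 0" "S > 0"
  shows "(s * s * s * S * (S * sqrt S) + s * s * S * S * (sqrt s * S) + s * S * S * S * (s * sqrt S)) / ((s * s * s) * (S * S * S))
     = 1/sqrt S + 1/sqrt s + sqrt S / s"
proof -
  have a: "sqrt S * sqrt S = S" "sqrt s * sqrt s = s" using assms by auto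
  have b: "sqrt S > 0" "sqrt s > 0" using assms by auto
  show ?thesis using assms b
    by (simp add: field_simps)
qed

lemma box_avg:
  fixes f :: gridfun
  assumes J: "J1 \<subseteq> {b1..<b1+S}" "J2 \<subseteq> {b2..<b2+S}" "J3 \<subseteq> {b3..<b3+S}"
    and cJ: "card J1 = s" "card J2 = s" "card J3 = s" and s1: "s \<ge> 1"
    and b: "b1 \<ge> 1" "b2 \<ge> 1" "b3 \<ge> 1" "b1 + S \<le> N + 1" "b2 + S \<le> N + 1" "b3 + S \<le> N + 1"
  shows "norm (avg (J1\<times>J2\<times>J3) f - avg ({b1..<b1+S}\<times>{b2..<b2+S}\<times>{b3..<b3+S}) f)
     \<le> (1/sqrt S + 1/sqrt s + sqrt S / s) * sqrt (EE N f)"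
proof -
  define I1 where "I1 = {b1..<b1+S}"
  define I2 where "I2 = {b2..<b2+S}"
  define I3 where "I3 = {b3..<b3+S}"
  have finJ: "finite J1" "finite J2" "finite J3" using cJ s1 by (auto intro!: card_ge_0_finite)
  have cI: "card I1 = S" "card I2 = S" "card I3 = S" by (auto simp: I1_def I2_def I3_def)
  have S1: "S \<ge> s" using card_mono[OF _ J(1)] cJ by auto
  have neJ: "J1 \<times> J2 \<times> J3 \<noteq> {}" using cJ s1 by auto
  have neI: "I1 \<times> I2 \<times> I3 \<noteq> {}" using S1 s1 by (auto simp: I1_def I2_def I3_def)
  define F where "F = (\<lambda>(i::nat,j::nat,l::nat). f i j l)"
  define P where "P = (\<lambda>y2 y3. (\<Sum>t\<in>I1. norm (f (t+1) y2 y3 - f t y2 y3)))"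
  define Q where "Q = (\<lambda>x1 y3. (\<Sum>t\<in>I2. norm (f x1 (t+1) y3 - f x1 t y3)))"
  define R where "R = (\<lambda>x1 x2. (\<Sum>t\<in>I3. norm (f x1 x2 (t+1) - f x1 x2 t)))"
  have int: "I1 \<times> I2 \<times> I3 \<subseteq> interior N" using b by (auto simp: I1_def I2_def I3_def interior_def)
  have JI: "J1 \<subseteq> I1" "J2 \<subseteq> I2" "J3 \<subseteq> I3" using J by (auto simp: I1_def I2_def I3_def)
  have step1: "norm (avg (J1\<times>J2\<times>J3) f - avg (I1\<times>I2\<times>I3) f)
     \<le> (\<Sum>a\<in>J1\<times>J2\<times>J3. \<Sum>b\<in>I1\<times>I2\<times>I3. norm (F a - F b)) / (real (card (J1\<times>J2\<times>J3)) * real (card (I1\<times>I2\<times>I3)))"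
    unfolding avg_def F_def[symmetric] using finJ neJ neI
    by (intro avg_diff) (auto simp: I1_def I2_def I3_def)
  have cards: "real (card (J1\<times>J2\<times>J3)) * real (card (I1\<times>I2\<times>I3)) = (s * s * s) * (S * S * S)"
    using cJ cI by (simp add: card_cartesian_product)
  have step2: "(\<Sum>a\<in>J1\<times>J2\<times>J3. \<Sum>b\<in>I1\<times>I2\<times>I3. norm (F a - F b)) \<le>
     (\<Sum>x1\<in>J1. \<Sum>x2\<in>J2. \<Sum>x3\<in>J3. \<Sum>y1\<in>I1. \<Sum>y2\<in>I2. \<Sum>y3\<in>I3. P y2 y3 + Q x1 y3 + R x1 x2)"
  proof -
    have "(\<Sum>a\<in>J1\<times>J2\<times>J3. \<Sum>b\<in>I1\<times>I2\<times>I3. norm (F a - F b)) =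
       (\<Sum>x1\<in>J1. \<Sum>x2\<in>J2. \<Sum>x3\<in>J3. \<Sum>y1\<in>I1. \<Sum>y2\<in>I2. \<Sum>y3\<in>I3. norm (f x1 x2 x3 - f y1 y2 y3))"
    proof -
      have "(\<Sum>a\<in>J1\<times>J2\<times>J3. \<Sum>b\<in>I1\<times>I2\<times>I3. norm (F a - F b)) =
        (\<Sum>(x1,x2,x3)\<in>J1\<times>J2\<times>J3. \<Sum>(y1,y2,y3)\<in>I1\<times>I2\<times>I3. norm (f x1 x2 x3 - f y1 y2 y3))"
        unfolding F_def by (simp add: case_prod_beta)
      also have "\<dots> = (\<Sum>x1\<in>J1. \<Sum>x2\<in>J2. \<Sum>x3\<in>J3. \<Sum>(y1,y2,y3)\<in>I1\<times>I2\<times>I3. norm (f x1 x2 x3 - f y1 y2 y3))"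
        by (rule sum3)
      also have "\<dots> = (\<Sum>x1\<in>J1. \<Sum>x2\<in>J2. \<Sum>x3\<in>J3. \<Sum>y1\<in>I1. \<Sum>y2\<in>I2. \<Sum>y3\<in>I3. norm (f x1 x2 x3 - f y1 y2 y3))"
        by (simp only: sum3)
      finally show ?thesis .
    qed
    also have "\<dots> \<le> (\<Sum>x1\<in>J1. \<Sum>x2\<in>J2. \<Sum>x3\<in>J3. \<Sum>y1\<in>I1. \<Sum>y2\<in>I2. \<Sum>y3\<in>I3. P y2 y3 + Q x1 y3 + R x1 x2)"
      unfolding P_def Q_def R_def I1_def I2_def I3_def
      apply (intro sum_mono)
      apply (rule leg)
      using JI by (auto simp: I1_def I2_def I3_def)
    finally show ?thesis .
  qed
  have step3: "(\<Sum>x1\<in>J1. \<Sum>x2\<in>J2. \<Sum>x3\<in>J3. \<Sum>y1\<in>I1. \<Sum>y2\<in>I2. \<Sum>y3\<in>I3. P y2 y3 + Q x1 y3 + R x1 x2)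
     = s * s * s * S * (\<Sum>y2\<in>I2. \<Sum>y3\<in>I3. P y2 y3) + s * s * S * S * (\<Sum>x1\<in>J1. \<Sum>y3\<in>I3. Q x1 y3)
       + s * S * S * S * (\<Sum>x1\<in>J1. \<Sum>x2\<in>J2. R x1 x2)"
    using sum6[OF cJ cI] by simp
  have nn: "\<And>i j l. norm (f (i+1) j l - f i j l) \<ge> 0" "\<And>i j l. norm (f i (j+1) l - f i j l) \<ge> 0"
     "\<And>i j l. norm (f i j (l+1) - f i j l) \<ge> 0" by auto
  have sE: "sqrt (\<Sum>(i,j,l)\<in>interior N. (norm (f (i+1) j l - f i j l))^2) \<le> sqrt (EE N f)"
     "sqrt (\<Sum>(i,j,l)\<in>interior N. (norm (f i (j+1) l - f i j l))^2) \<le> sqrt (EE N f)"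
     "sqrt (\<Sum>(i,j,l)\<in>interior N. (norm (f i j (l+1) - f i j l))^2) \<le> sqrt (EE N f)"
    using EE_ge by (auto intro: real_sqrt_le_mono)
  have hP: "(\<Sum>y2\<in>I2. \<Sum>y3\<in>I3. P y2 y3) \<le> (S * sqrt S) * sqrt (EE N f)"
  proof -
    have "(\<Sum>y2\<in>I2. \<Sum>y3\<in>I3. P y2 y3) = (\<Sum>t\<in>I1. \<Sum>y2\<in>I2. \<Sum>y3\<in>I3. norm (f (t+1) y2 y3 - f t y2 y3))"
      unfolding P_def
      by (subst sum.swap, rule sum.cong[OF refl], rule sum.swap)
    also have "\<dots> \<le> sqrt (card I1 * card I2 * card I3) * sqrt (\<Sum>(i,j,l)\<in>interior N. (norm (f (i+1) j l - f i j l))^2)"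
      by (rule cs_piece[OF int]) simp
    also have "\<dots> \<le> sqrt (card I1 * card I2 * card I3) * sqrt (EE N f)"
      by (intro mult_left_mono sE) auto
    also have "sqrt (card I1 * card I2 * card I3) = S * sqrt S"
      using cI by (simp add: real_sqrt_mult)
    finally show ?thesis .
  qed
  have hQ: "(\<Sum>x1\<in>J1. \<Sum>y3\<in>I3. Q x1 y3) \<le> (sqrt s * S) * sqrt (EE N f)"
  proof -
    have "(\<Sum>x1\<in>J1. \<Sum>y3\<in>I3. Q x1 y3) = (\<Sum>x1\<in>J1. \<Sum>t\<in>I2. \<Sum>y3\<in>I3. norm (f x1 (t+1) y3 - f x1 t y3))"
      unfolding Q_def by (rule sum.cong[OF refl], rule sum.swap)
    also have "\<dots> \<le> sqrt (card J1 * card I2 * card I3) * sqrt (\<Sum>(i,j,l)\<in>interior N. (norm (f i (j+1) l - f i j l))^2)"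
      by (rule cs_piece) (use int JI in auto)
    also have "\<dots> \<le> sqrt (card J1 * card I2 * card I3) * sqrt (EE N f)"
      by (intro mult_left_mono sE) auto
    also have "sqrt (card J1 * card I2 * card I3) = sqrt s * S"
      using cI cJ by (simp add: real_sqrt_mult)
    finally show ?thesis .
  qed
  have hR: "(\<Sum>x1\<in>J1. \<Sum>x2\<in>J2. R x1 x2) \<le> (s * sqrt S) * sqrt (EE N f)"
  proof -
    have "(\<Sum>x1\<in>J1. \<Sum>x2\<in>J2. R x1 x2) = (\<Sum>x1\<in>J1. \<Sum>x2\<in>J2. \<Sum>t\<in>I3. norm (f x1 x2 (t+1) - f x1 x2 t))"
      unfolding R_def by simp
    also have "\<dots> \<le> sqrt (card J1 * card J2 * card I3) * sqrt (\<Sum>(i,j,l)\<in>interior N. (norm (f i j (l+1) - f i j l))^2)"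
      by (rule cs_piece) (use int JI in auto)
    also have "\<dots> \<le> sqrt (card J1 * card J2 * card I3) * sqrt (EE N f)"
      by (intro mult_left_mono sE) auto
    also have "sqrt (card J1 * card J2 * card I3) = s * sqrt S"
      using cI cJ by (simp add: real_sqrt_mult)
    finally show ?thesis .
  qed
  have numer: "(\<Sum>a\<in>J1\<times>J2\<times>J3. \<Sum>b\<in>I1\<times>I2\<times>I3. norm (F a - F b))
     \<le> (s * s * s * S * (S * sqrt S) + s * s * S * S * (sqrt s * S) + s * S * S * S * (s * sqrt S)) * sqrt (EE N f)"
  proof -
    have "s * s * s * S * (\<Sum>y2\<in>I2. \<Sum>y3\<in>I3. P y2 y3) \<le> s * s * s * S * ((S * sqrt S) * sqrt (EE N f))"
      by (intro mult_left_mono hP) auto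
    moreover have "s * s * S * S * (\<Sum>x1\<in>J1. \<Sum>y3\<in>I3. Q x1 y3) \<le> s * s * S * S * ((sqrt s * S) * sqrt (EE N f))"
      by (intro mult_left_mono hQ) auto
    moreover have "s * S * S * S * (\<Sum>x1\<in>J1. \<Sum>x2\<in>J2. R x1 x2) \<le> s * S * S * S * ((s * sqrt S) * sqrt (EE N f))"
      by (intro mult_left_mono hR) auto
    ultimately have "(\<Sum>a\<in>J1\<times>J2\<times>J3. \<Sum>b\<in>I1\<times>I2\<times>I3. norm (F a - F b)) \<le>
      s * s * s * S * ((S * sqrt S) * sqrt (EE N f)) + s * s * S * S * ((sqrt s * S) * sqrt (EE N f)) + s * S * S * S * ((s * sqrt S) * sqrt (EE N f))"
      using step2 step3 by linarith
    then show ?thesis by (simp add: algebra_simps)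
  qed
  have "norm (avg (J1\<times>J2\<times>J3) f - avg (I1\<times>I2\<times>I3) f)
     \<le> (s * s * s * S * (S * sqrt S) + s * s * S * S * (sqrt s * S) + s * S * S * S * (s * sqrt S)) * sqrt (EE N f) / ((s * s * s) * (S * S * S))"
  proof -
    have pos: "real (card (J1\<times>J2\<times>J3)) * real (card (I1\<times>I2\<times>I3)) > 0"
      unfolding cards using s1 S1 by simp
    show ?thesis
      using order_trans[OF step1 divide_right_mono[OF numer less_imp_le[OF pos]]] unfolding cards .
  qed
  also have "\<dots> = (1/sqrt S + 1/sqrt s + sqrt S / s) * sqrt (EE N f)"
  proof -
    have ceq: "(s * s * s * S * (S * sqrt S) + s * s * S * S * (sqrt s * S) + s * S * S * S * (s * sqrt S)) / ((s * s * s) * (S * S * S))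
       = 1/sqrt S + 1/sqrt s + sqrt S / s"
      using coeff_eq[of "real s" "real S"] s1 S1 by simp
    show ?thesis unfolding times_divide_eq_left[symmetric] ceq ..
  qed
  finally show ?thesis by (simp add: I1_def I2_def I3_def)
qed


lemma avg_bound:
  fixes f :: gridfun
  assumes "b1 \<ge> 1" "b2 \<ge> 1" "b3 \<ge> 1" "b1 + S \<le> N + 1" "b2 + S \<le> N + 1" "b3 + S \<le> N + 1" "S \<ge> 1"
  shows "norm (avg ({b1..<b1+S}\<times>{b2..<b2+S}\<times>{b3..<b3+S}) f)
    \<le> sqrt (\<Sum>(a,b,c)\<in>interior N. (norm (f a b c))^2) / (S * sqrt S)"
proof -
  define B where "B = {b1..<b1+S}\<times>{b2..<b2+S}\<times>{b3..<b3+S}"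
  have cB: "card B = S * S * S" by (simp add: B_def card_cartesian_product)
  have sub: "B \<subseteq> interior N" using assms by (auto simp: B_def interior_def)
  have "norm (avg B f) = (1 / real (card B)) * norm (\<Sum>p\<in>B. (\<lambda>(a,b,c). f a b c) p)"
    by (simp add: avg_def)
  also have "\<dots> \<le> (1 / real (card B)) * (\<Sum>p\<in>B. norm ((\<lambda>(a,b,c). f a b c) p))"
    by (intro mult_left_mono norm_sum) auto
  also have "\<dots> \<le> (1 / real (card B)) * (sqrt (card B) * sqrt (\<Sum>p\<in>interior N. (norm ((\<lambda>(a,b,c). f a b c) p))^2))"
    by (intro mult_left_mono sum_le_sqrt_card) (use sub in \<open>auto simp: interior_def\<close>)
  also have "\<dots> = sqrt (\<Sum>(a,b,c)\<in>interior N. (norm (f a b c))^2) / (S * sqrt S)"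
  proof -
    define a where "a = real S * sqrt S"
    define X where "X = sqrt (\<Sum>p\<in>interior N. (norm ((\<lambda>(a,b,c). f a b c) p))^2)"
    have a0: "a > 0" using assms by (simp add: a_def)
    have h1: "sqrt (real (card B)) = a" unfolding cB a_def by (simp add: real_sqrt_mult)
    have h2: "real (card B) = a * a" unfolding cB a_def
      by (simp add: algebra_simps)
    have "(1 / real (card B)) * (sqrt (card B) * X) = X / a"
      unfolding h1 h2 using a0 by (simp add: field_simps)
    then show ?thesis unfolding X_def a_def by (simp add: case_prod_beta)
  qed
  finally show ?thesis by (simp add: B_def)
qed

lemma avg_single: "avg ({i}\<times>{j}\<times>{l}) f = f i j l"
  by (simp add: avg_def)

lemma linf:
  fixes f :: gridfun and s S :: nat
  assumes p: "(i,j,l) \<in> interior N" and s: "1 \<le> s" "s \<le> S" "S \<le> N"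
  shows "norm (f i j l) \<le> (4 + sqrt s + sqrt S / s) * sqrt (EE N f)
     + sqrt (\<Sum>(a,b,c)\<in>interior N. (norm (f a b c))^2) / (S * sqrt S)"
proof -
  define b1 where "b1 = min i (N+1-s)"
  define b2 where "b2 = min j (N+1-s)"
  define b3 where "b3 = min l (N+1-s)"
  define c1 where "c1 = min i (N+1-S)"
  define c2 where "c2 = min j (N+1-S)"
  define c3 where "c3 = min l (N+1-S)"
  have pi: "1 \<le> i" "i \<le> N" "1 \<le> j" "j \<le> N" "1 \<le> l" "l \<le> N" using p by (auto simp: interior_def)
  have A: "norm (avg ({i}\<times>{j}\<times>{l}) f - avg ({b1..<b1+s}\<times>{b2..<b2+s}\<times>{b3..<b3+s}) f)
     \<le> (1/sqrt s + 1/sqrt (real (1::nat)) + sqrt s / real (1::nat)) * sqrt (EE N f)"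
    by (rule box_avg[where s=1]) (use pi s in \<open>auto simp: b1_def b2_def b3_def\<close>)
  have B: "norm (avg ({b1..<b1+s}\<times>{b2..<b2+s}\<times>{b3..<b3+s}) f - avg ({c1..<c1+S}\<times>{c2..<c2+S}\<times>{c3..<c3+S}) f)
     \<le> (1/sqrt S + 1/sqrt s + sqrt S / s) * sqrt (EE N f)"
    by (rule box_avg) (use pi s in \<open>auto simp: b1_def b2_def b3_def c1_def c2_def c3_def\<close>)
  have C: "norm (avg ({c1..<c1+S}\<times>{c2..<c2+S}\<times>{c3..<c3+S}) f)
    \<le> sqrt (\<Sum>(a,b,c)\<in>interior N. (norm (f a b c))^2) / (S * sqrt S)"
    by (rule avg_bound) (use pi s in \<open>auto simp: c1_def c2_def c3_def\<close>)
  have tri: "norm (f i j l) \<le> norm (avg ({i}\<times>{j}\<times>{l}) f - avg ({b1..<b1+s}\<times>{b2..<b2+s}\<times>{b3..<b3+s}) f)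
    + norm (avg ({b1..<b1+s}\<times>{b2..<b2+s}\<times>{b3..<b3+s}) f - avg ({c1..<c1+S}\<times>{c2..<c2+S}\<times>{c3..<c3+S}) f)
    + norm (avg ({c1..<c1+S}\<times>{c2..<c2+S}\<times>{c3..<c3+S}) f)"
  proof -
    define u where "u = avg ({b1..<b1+s}\<times>{b2..<b2+s}\<times>{b3..<b3+s}) f"
    define v where "v = avg ({c1..<c1+S}\<times>{c2..<c2+S}\<times>{c3..<c3+S}) f"
    have "norm (f i j l) \<le> norm (f i j l - u) + norm (u - v) + norm v"
      using norm_triangle_ineq[of "f i j l - u" "u - v"] norm_triangle_ineq[of "f i j l - v" v]
      by simp
    then show ?thesis unfolding avg_single u_def v_def .
  qed
  have i1: "1/sqrt s \<le> 1" "1/sqrt S \<le> 1" using s by auto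
  have E0: "sqrt (EE N f) \<ge> 0" using EE_nonneg by simp
  have "(1/sqrt s + 1/sqrt (real (1::nat)) + sqrt s / real (1::nat)) * sqrt (EE N f) + (1/sqrt S + 1/sqrt s + sqrt S / s) * sqrt (EE N f)
     \<le> (4 + sqrt s + sqrt S / s) * sqrt (EE N f)"
  proof -
    have "(1/sqrt s + 1/sqrt (real (1::nat)) + sqrt s / real (1::nat)) + (1/sqrt S + 1/sqrt s + sqrt S / s)
      \<le> 4 + sqrt s + sqrt S / s" using i1 by simp
    from mult_right_mono[OF this E0] show ?thesis by (simp add: distrib_right)
  qed
  then show ?thesis using tri A B C by linarith
qed


lemma ginner_self: "ginner N f f = (1 / real N)^3 * (\<Sum>(a,b,c)\<in>interior N. (norm (f a b c))^2)"
  unfolding ginner_def meshsize_def by (simp add: power2_norm_eq_inner case_prod_beta)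

lemma ginner_self_nonneg: "ginner N f f \<ge> 0"
  unfolding ginner_self by (auto intro!: sum_nonneg mult_nonneg_nonneg simp: case_prod_beta)

lemma norm2_sq: "(norm2 N f)^2 = ginner N f f"
  unfolding norm2_def using ginner_self_nonneg by simp

lemma norm2_nonneg: "norm2 N f \<ge> 0"
  unfolding norm2_def using ginner_self_nonneg by simp

lemma SQ_eq:
  assumes "N \<ge> 1"
  shows "sqrt (\<Sum>(a,b,c)\<in>interior N. (norm (f a b c))^2) = real N * sqrt N * norm2 N f"
proof -
  have "(\<Sum>(a,b,c)\<in>interior N. (norm (f a b c))^2) = real N ^ 3 * (norm2 N f)^2"
    unfolding norm2_sq ginner_self using assms by (simp add: field_simps)
  then have "sqrt (\<Sum>(a,b,c)\<in>interior N. (norm (f a b c))^2) = sqrt (real N ^ 3) * norm2 N f"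
    using norm2_nonneg by (simp add: real_sqrt_mult)
  also have "sqrt (real N ^ 3) = real N * sqrt N"
    by (simp add: power3_eq_cube real_sqrt_mult)
  finally show ?thesis .
qed

lemma gradnorm2_nonneg: "gradnorm2 N f \<ge> 0"
  unfolding gradnorm2_def meshsize_def by (auto intro!: sum_nonneg mult_nonneg_nonneg simp: case_prod_beta)

lemma EE_eq:
  assumes "N \<ge> 1"
  shows "sqrt (EE N f) = sqrt N * gradnorm2 N f"
proof -
  have nD: "norm (Dx N f i j l) = real N * norm (f (i+1) j l - f i j l)"
    "norm (Dy N f i j l) = real N * norm (f i (j+1) l - f i j l)"
    "norm (Dz N f i j l) = real N * norm (f i j (l+1) - f i j l)" for i j l
    unfolding Dx_def Dy_def Dz_def meshsize_def by simp_all
  have "(\<Sum>(i,j,l)\<in>interior N. (norm (Dx N f i j l))^2 + (norm (Dy N f i j l))^2 + (norm (Dz N f i j l))^2)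
     = (real N)^2 * EE N f"
    unfolding EE_def nD by (simp add: sum_distrib_left case_prod_beta power_mult_distrib algebra_simps)
  then have "(gradnorm2 N f)^2 = EE N f / real N"
    unfolding gradnorm2_def meshsize_def using assms EE_nonneg[of N f]
    by (simp add: field_simps power2_eq_square power3_eq_cube)
  then have "EE N f = real N * (gradnorm2 N f)^2" using assms by (simp add: field_simps)
  then show ?thesis using gradnorm2_nonneg[of N f] by (simp add: real_sqrt_mult)
qed

lemma linf2:
  fixes f :: gridfun and m :: nat
  assumes "N \<ge> 1" "(i,j,l) \<in> interior N" "m \<ge> 1" "m^6 \<le> N"
  shows "norm (f i j l) \<le> (4 + 2 * real m) * (sqrt N * gradnorm2 N f) + real N * sqrt N * norm2 N f / real m ^ 9"
proof -
  have m2: "1 \<le> m^2" using assms by simp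
  have m26: "m^2 \<le> m^6" using assms by (simp add: power_increasing)
  have L: "norm (f i j l) \<le> (4 + sqrt (m^2) + sqrt (m^6) / (m^2)) * sqrt (EE N f)
     + sqrt (\<Sum>(a,b,c)\<in>interior N. (norm (f a b c))^2) / (m^6 * sqrt (m^6))"
    using linf[OF assms(2) m2 m26 assms(4)] by simp
  have s1: "sqrt (real m ^ 2) = m" by simp
  have s2: "sqrt (real m ^ 6) = real m ^ 3"
    by (metis of_nat_0_le_iff power_mult real_sqrt_abs real_sqrt_pow2_iff abs_of_nonneg num_double numeral_times_numeral power2_eq_square real_sqrt_mult_self mult.commute power_mult_distrib sqrt_le_D zero_le_power)
  have c1: "sqrt (real m ^ 6) / real m ^ 2 = m" unfolding s2 using assms by (simp add: power_eq_if)
  have c2: "real m ^ 6 * sqrt (real m ^ 6) = real m ^ 9" unfolding s2 by (simp add: power_add[symmetric])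
  have d1: "(4 + sqrt (m^2) + sqrt (m^6) / (m^2)) = 4 + 2 * real m"
    using s1 c1 by simp
  have d2: "(m^6 * sqrt (m^6)) = real m ^ 9" using c2 by simp
  show ?thesis using L unfolding d1 d2 EE_eq[OF assms(1)] SQ_eq[OF assms(1)] .
qed



lemma young_aux:
  fixes a b K C E :: real
  assumes "a > 0" "K^2 \<le> 4*a*b"
  shows "K * C * E \<le> a * C^2 + b * E^2"
proof -
  have eq: "4*a*(a * C^2 + b * E^2 - K * C * E) = (2*a*C - K*E)^2 + (4*a*b - K^2)*E^2"
    by (simp add: algebra_simps power2_eq_square)
  have "(2*a*C - K*E)^2 + (4*a*b - K^2)*E^2 \<ge> 0"
    using assms by (intro add_nonneg_nonneg) auto
  then have "4*a*(a * C^2 + b * E^2 - K * C * E) \<ge> 0" using eq by simp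
  then have "a * C^2 + b * E^2 - K * C * E \<ge> 0" using assms
    by (simp add: zero_le_mult_iff)
  then show ?thesis by simp
qed

lemma pw:
  fixes u1 u2 v1 v2 :: "real^3"
  assumes u: "norm u1 = 1" "norm u2 = 1" and v: "norm (u1 - v1) \<le> \<eta>" "norm (u2 - v2) \<le> \<eta>" "\<eta> \<le> 1/2"
    and r: "norm (u1 - u2) \<le> \<rho>" "5*\<eta> + \<rho> \<le> K" and ab: "a > 0" "K^2 \<le> 4*a*b"
  shows "\<bar>(v1 /\<^sub>R norm v1 - v1) \<bullet> (u2 - v2 /\<^sub>R norm v2)\<bar> \<le>
    a * ((v1 /\<^sub>R norm v1 - v1) \<bullet> (v1 /\<^sub>R norm v1 - v1)) + b * ((u2 - v2 /\<^sub>R norm v2) \<bullet> (u2 - v2 /\<^sub>R norm v2))"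
proof -
  define n1 where "n1 = norm v1"
  define n2 where "n2 = norm v2"
  have tn1: "\<bar>1 - n1\<bar> \<le> \<eta>" unfolding n1_def using norm_triangle_ineq3[of u1 v1] u v by simp
  have tn2: "\<bar>1 - n2\<bar> \<le> \<eta>" unfolding n2_def using norm_triangle_ineq3[of u2 v2] u v by simp
  have n1p: "n1 > 0" using tn1 v by linarith
  have n2p: "n2 > 0" using tn2 v by linarith
  define m1 where "m1 = v1 /\<^sub>R n1"
  define m2 where "m2 = v2 /\<^sub>R n2"
  have nm1: "norm m1 = 1" unfolding m1_def n1_def using n1p n1_def by simp
  have nm2: "norm m2 = 1" unfolding m2_def n2_def using n2p n2_def by simp
  have v1eq: "v1 = n1 *\<^sub>R m1" unfolding m1_def using n1p by simp
  have v2eq: "v2 = n2 *\<^sub>R m2" unfolding m2_def using n2p by simp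
  define c where "c = 1 - n1"
  have deq: "m1 - v1 = c *\<^sub>R m1" unfolding c_def by (subst v1eq) (simp add: algebra_simps)
  have cb: "\<bar>c\<bar> \<le> \<eta>" using tn1 c_def by simp
  have "v2 - m2 = (n2 - 1) *\<^sub>R m2" by (subst v2eq) (simp add: scaleR_diff_left)
  then have "norm (v2 - m2) = \<bar>n2 - 1\<bar>" using nm2 by simp
  then have "norm (v2 - m2) \<le> \<eta>" using tn2 by simp
  then have e2: "norm (u2 - m2) \<le> 2*\<eta>"
    using norm_triangle_ineq[of "u2 - v2" "v2 - m2"] v by simp
  have "v1 - m1 = (n1 - 1) *\<^sub>R m1" by (subst v1eq) (simp add: scaleR_diff_left)
  then have "norm (v1 - m1) = \<bar>n1 - 1\<bar>" using nm1 by simp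
  then have "norm (v1 - m1) \<le> \<eta>" using tn1 by simp
  then have e1: "norm (u1 - m1) \<le> 2*\<eta>"
    using norm_triangle_ineq[of "u1 - v1" "v1 - m1"] v by simp
  define e where "e = u2 - m2"
  have mm: "norm (m1 - m2) \<le> 4*\<eta> + \<rho>"
  proof -
    have "norm (m1 - m2) \<le> norm (m1 - u1) + norm (u1 - u2) + norm (u2 - m2)"
      using norm_triangle_ineq[of "m1 - u1" "u1 - u2"] norm_triangle_ineq[of "m1 - u2" "u2 - m2"] by simp
    then show ?thesis using e1 e2 r by (simp add: norm_minus_commute)
  qed
  have m2e: "m2 \<bullet> e = -(((norm e)^2) / 2)"
  proof -
    have "(norm e)^2 = e \<bullet> e" by (simp add: power2_norm_eq_inner)
    also have "\<dots> = u2 \<bullet> u2 - 2 * (u2 \<bullet> m2) + m2 \<bullet> m2" unfolding e_def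
      by (simp add: algebra_simps inner_commute)
    also have "\<dots> = 2 - 2 * (u2 \<bullet> m2)" using u nm2 by (simp add: norm_eq_1)
    finally have "(norm e)^2 = 2 - 2 * (u2 \<bullet> m2)" .
    moreover have "m2 \<bullet> e = m2 \<bullet> u2 - 1" unfolding e_def using nm2
      by (simp add: inner_diff_right norm_eq_1)
    ultimately show ?thesis by (simp add: inner_commute field_simps)
  qed
  have m1e: "\<bar>m1 \<bullet> e\<bar> \<le> K * norm e"
  proof -
    have "m1 \<bullet> e = m2 \<bullet> e + (m1 - m2) \<bullet> e" by (simp add: inner_diff_left)
    then have "\<bar>m1 \<bullet> e\<bar> \<le> (norm e)^2 / 2 + norm (m1 - m2) * norm e"
    proof -
      have h: "(norm e)^2 / 2 \<ge> 0" by simp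
      show ?thesis using \<open>m1 \<bullet> e = m2 \<bullet> e + (m1 - m2) \<bullet> e\<close> m2e Cauchy_Schwarz_ineq2[of "m1 - m2" e] h
        by (smt (verit))
    qed
    also have "\<dots> \<le> norm e * (\<eta> + (4*\<eta> + \<rho>))"
    proof -
      have "norm e * norm e \<le> norm e * (2 * \<eta>)" using e2 unfolding e_def
        by (intro mult_left_mono) auto
      then have "(norm e)^2 / 2 \<le> norm e * \<eta>" by (simp add: power2_eq_square)
      moreover have "norm (m1 - m2) * norm e \<le> (4*\<eta> + \<rho>) * norm e"
        using mm by (simp add: mult_right_mono)
      ultimately show ?thesis by (simp add: algebra_simps)
    qed
    also have "\<dots> \<le> norm e * K" using r by (intro mult_left_mono) auto
    finally show ?thesis by (simp add: mult.commute)
  qed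
  have lhs: "\<bar>(m1 - v1) \<bullet> e\<bar> \<le> K * \<bar>c\<bar> * norm e"
  proof -
    have "\<bar>(m1 - v1) \<bullet> e\<bar> = \<bar>c\<bar> * \<bar>m1 \<bullet> e\<bar>" unfolding deq by (simp add: abs_mult)
    also have "\<dots> \<le> \<bar>c\<bar> * (K * norm e)" by (intro mult_left_mono m1e) auto
    finally show ?thesis by (simp add: algebra_simps)
  qed
  have dd: "(m1 - v1) \<bullet> (m1 - v1) = \<bar>c\<bar>^2" unfolding deq using nm1
    by (simp add: norm_eq_1 power2_eq_square)
  have ee: "e \<bullet> e = (norm e)^2" by (simp add: power2_norm_eq_inner)
  have "K * \<bar>c\<bar> * norm e \<le> a * \<bar>c\<bar>^2 + b * (norm e)^2" by (rule young_aux[OF ab])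
  then show ?thesis using lhs dd ee unfolding m1_def m2_def n1_def n2_def e_def by simp
qed


lemma sum_core:
  fixes mu1 mu2 mt1 mt2 :: gridfun and x :: real
  assumes x: "x > 0" "x \<le> 1"
    and pt: "\<And>i j l. (i,j,l) \<in> interior N \<Longrightarrow>
       norm (mu1 i j l) = 1 \<and> norm (mu2 i j l) = 1 \<and> norm (mu1 i j l - mt1 i j l) \<le> x^12/5
       \<and> norm (mu2 i j l - mt2 i j l) \<le> x^12/5 \<and> norm (mu1 i j l - mu2 i j l) \<le> x^14/4"
  shows "\<bar>ginner N ((mu1 - mt1) - (mu1 - normalize mt1)) (mu2 - normalize mt2)\<bar>
    \<le> x^20 * (norm2 N (mu2 - normalize mt2))^2 + x^4 * (norm2 N ((mu1 - mt1) - (mu1 - normalize mt1)))^2"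
proof -
  define d where "d = (mu1 - mt1) - (mu1 - normalize mt1)"
  define e where "e = mu2 - normalize mt2"
  have dv: "d i j l = mt1 i j l /\<^sub>R norm (mt1 i j l) - mt1 i j l" for i j l
    unfolding d_def normalize_def by simp
  have ev: "e i j l = mu2 i j l - mt2 i j l /\<^sub>R norm (mt2 i j l)" for i j l
    unfolding e_def normalize_def by simp
  have x12: "x^12 \<le> 1" using x by (simp add: power_le_one)
  have x14: "x^14/4 \<le> x^12"
  proof -
    have "x^14 = x^12 * x^2" by (simp add: power_add[symmetric])
    also have "\<dots> \<le> x^12 * 1" using x by (intro mult_left_mono) (auto simp: power_le_one)
    finally have "x^14 \<le> x^12" by simp
    moreover have "x^12 \<ge> 0" using x by simp
    ultimately show ?thesis by linarith
  qed
  have pwb: "\<bar>d i j l \<bullet> e i j l\<bar> \<le> x^4 * (d i j l \<bullet> d i j l) + x^20 * (e i j l \<bullet> e i j l)"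
    if "(i,j,l) \<in> interior N" for i j l
  proof -
    have K: "(2 * x^12)^2 \<le> 4 * x^4 * x^20" by (simp add: power_mult_distrib power_add[symmetric] power_mult[symmetric])
    show ?thesis unfolding dv ev
      by (rule pw[where \<eta>="x^12/5" and \<rho>="x^14/4" and K="2*x^12"]) (use pt[OF that] x12 x14 x K in auto)
  qed
  have "\<bar>ginner N d e\<bar> = (1 / real N)^3 * \<bar>\<Sum>(i,j,l)\<in>interior N. d i j l \<bullet> e i j l\<bar>"
    unfolding ginner_def meshsize_def by (simp add: abs_mult)
  also have "\<dots> \<le> (1 / real N)^3 * (\<Sum>(i,j,l)\<in>interior N. \<bar>d i j l \<bullet> e i j l\<bar>)"
    by (intro mult_left_mono) (auto simp: case_prod_beta intro: order_trans[OF sum_abs])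
  also have "\<dots> \<le> (1 / real N)^3 * (\<Sum>(i,j,l)\<in>interior N. x^4 * (d i j l \<bullet> d i j l) + x^20 * (e i j l \<bullet> e i j l))"
    by (intro mult_left_mono sum_mono) (auto simp: pwb)
  also have "\<dots> = x^4 * ginner N d d + x^20 * ginner N e e"
    unfolding ginner_def meshsize_def
    by (simp add: sum.distrib sum_distrib_left case_prod_beta algebra_simps)
  finally show ?thesis unfolding d_def[symmetric] e_def[symmetric] norm2_sq by simp
qed



lemma eta_bound:
  fixes x c1 c2 m n G L :: real
  assumes x: "x > 0" "x \<le> 1" and c: "c1 > 0" "c2 > 0"
    and m: "m \<ge> 1" "m \<le> c1/x" "c1/(2*x) \<le> m"
    and n: "n \<ge> 0" "n \<le> (c2/x)^16"
    and G: "G \<ge> 0" "G \<le> x^22/2" and L: "L \<ge> 0" "L \<le> 2*x^30"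
    and K: "x * (3*c1*c2^8 + 1024*c2^24/c1^9) \<le> 1/5"
  shows "(4 + 2*m) * (sqrt n * G) + n * sqrt n * L / m^9 \<le> x^12/5"
proof -
  have sq: "sqrt n \<le> (c2/x)^8"
  proof -
    have "sqrt n \<le> sqrt ((c2/x)^16)" using n by simp
    also have "sqrt ((c2/x)^16) = (c2/x)^8"
    proof -
      have "(c2/x)^16 = ((c2/x)^8)^2" by (simp flip: power_mult)
      moreover have "sqrt (((c2/x)^8)^2) = (c2/x)^8" by (subst real_sqrt_abs) (use c x in simp)
      ultimately show ?thesis by simp
    qed
    finally show ?thesis .
  qed
  have sn0: "sqrt n \<ge> 0" using n by simp
  have T1: "(4 + 2*m) * (sqrt n * G) \<le> (6 * (c1/x)) * ((c2/x)^8 * (x^22/2))"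
  proof (rule mult_mono)
    show "4 + 2*m \<le> 6 * (c1/x)" using m by simp
    show "sqrt n * G \<le> (c2/x)^8 * (x^22/2)" using sq G sn0 by (intro mult_mono) auto
  qed (use m sn0 G in auto)
  have T1': "(6 * (c1/x)) * ((c2/x)^8 * (x^22/2)) = 3*c1*c2^8 * x^13"
  proof -
    have e: "x^22 = x^9 * x^13" using power_add[of x 9 13] by simp
    have e1: "x^22 = x * x^21" using power_add[of x 1 21] by simp
    show ?thesis using x e1 by (simp add: field_simps power_divide)
  qed
  have mp: "m > 0" using m by simp
  have im: "1/m^9 \<le> (2*x/c1)^9"
  proof -
    have "c1/(2*x) > 0" using x c by simp
    then have "(c1/(2*x))^9 \<le> m^9" using m by (intro power_mono) auto
    then have "1/m^9 \<le> 1/(c1/(2*x))^9" using \<open>c1/(2*x) > 0\<close> mp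
      by (intro divide_left_mono) (auto intro!: mult_pos_pos)
    also have "\<dots> = (2*x/c1)^9" by (simp add: power_divide)
    finally show ?thesis .
  qed
  have T2: "n * sqrt n * L / m^9 \<le> ((c2/x)^16 * (c2/x)^8) * (2*x^30) * (2*x/c1)^9"
  proof -
    have "n * sqrt n * L / m^9 = (n * sqrt n * L) * (1/m^9)" by simp
    also have "\<dots> \<le> ((c2/x)^16 * (c2/x)^8) * (2*x^30) * (2*x/c1)^9"
      apply (intro mult_mono)
      using n sq sn0 L im mp by (auto intro!: mult_nonneg_nonneg)
    finally show ?thesis .
  qed
  have T2': "((c2/x)^16 * (c2/x)^8) * (2*x^30) * (2*x/c1)^9 = 1024*c2^24/c1^9 * x^15"
  proof -
    have e: "x^39 = x^24 * x^15" using power_add[of x 24 15] by simp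
    have e2: "(c2/x)^16 * (c2/x)^8 = c2^24 / x^24" using power_add[of "c2/x" 16 8] by (simp add: power_divide)
    have e3: "(2*x/c1)^9 = 512 * x^9 / c1^9" by (simp add: power_divide power_mult_distrib)
    show ?thesis unfolding e2 e3 using x c by (simp add: field_simps)
  qed
  have x15: "x^15 \<le> x^13"
    using x by (simp add: power_decreasing)
  have "1024*c2^24/c1^9 * x^15 \<le> 1024*c2^24/c1^9 * x^13"
    using x15 c by (intro mult_left_mono) auto
  then have "(4 + 2*m) * (sqrt n * G) + n * sqrt n * L / m^9 \<le> x^13 * (3*c1*c2^8 + 1024*c2^24/c1^9)"
    using T1 T1' T2 T2' by (simp add: algebra_simps)
  also have "\<dots> = x^12 * (x * (3*c1*c2^8 + 1024*c2^24/c1^9))"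
    using power_add[of x 12 1] by (simp add: mult.assoc)
  also have "\<dots> \<le> x^12 * (1/5)" using K x by (intro mult_left_mono) auto
  finally show ?thesis by simp
qed


lemma kpow:
  fixes x :: real
  assumes "x > 0"
  shows "(x^16) powr (real n / 16) = x^n"
proof -
  have "x^16 = x powr 16" using assms by (simp add: powr_realpow)
  then have "(x^16) powr (real n / 16) = x powr (16 * (real n / 16))" by (simp add: powr_powr)
  also have "\<dots> = x^n" using assms by (simp add: powr_realpow)
  finally show ?thesis .
qed

lemma finite_interior: "finite (interior N)"
  unfolding interior_def by simp

lemma le_norminf:
  assumes "(i,j,l) \<in> interior N"
  shows "norm (f i j l) \<le> norminf N f"
  unfolding norminf_def
  by (rule Max_ge) (use assms finite_interior in \<open>force+\<close>)

theorem mainTheorem4: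
  fixes Cs C1 C2 :: real
  assumes "Cs > 0" "C1 > 0" "C2 > 0"
  shows "\<exists>\<epsilon>>0. \<forall>(N::nat) (k::real) (mu1::gridfun) mu2 mt1 mt2.
    N \<ge> 1 \<and> meshsize N < \<epsilon> \<and> k < \<epsilon> \<and>
    inX N mu1 \<and> inX N mu2 \<and> inX N mt1 \<and> inX N mt2 \<and>
    (\<forall>(i,j,l)\<in>allpts N. norm (mu1 i j l) = 1 \<and> norm (mu2 i j l) = 1) \<and>
    norminf N mu1 + gradnorminf N mu1 \<le> Cs \<and>
    norminf N mu2 + gradnorminf N mu2 \<le> Cs \<and>
    C1 * meshsize N \<le> k \<and> k \<le> C2 * meshsize N \<and>
    norm2 N (mu1 - mt1) \<le> 2 * k powr (15/8) \<and>
    norm2 N (mu2 - mt2) \<le> 2 * k powr (15/8) \<and>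
    gradnorm2 N (mu1 - mt1) \<le> 1/2 * k powr (11/8) \<and>
    gradnorm2 N (mu2 - mt2) \<le> 1/2 * k powr (11/8) \<and>
    norminf N (mu1 - mu2) \<le> 1/4 * k powr (7/8)
    \<longrightarrow>
    (let e1 = mu1 - normalize mt1; e2 = mu2 - normalize mt2; et1 = mu1 - mt1 in
      \<bar>ginner N (et1 - e1) e2\<bar> \<le> k powr (5/4) * (norm2 N e2)^2 + k powr (1/4) * (norm2 N (et1 - e1))^2)"
proof -
  define c1 where "c1 = root 16 C1"
  define c2 where "c2 = root 16 C2"
  have c1p: "c1 > 0" and c2p: "c2 > 0" using assms by (auto simp: c1_def c2_def)
  have c1e: "c1^16 = C1" and c2e: "c2^16 = C2" using assms by (auto simp: c1_def c2_def real_root_pow_pos2)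
  define K0 where "K0 = 3*c1*c2^8 + 1024*c2^24/c1^9"
  have K0p: "K0 > 0" using c1p c2p unfolding K0_def by (intro add_pos_pos mult_pos_pos divide_pos_pos) auto
  define \<delta> where "\<delta> = min 1 (min c1 (1/(5*K0)))"
  have \<delta>p: "\<delta> > 0" using c1p K0p by (simp add: \<delta>_def)
  show ?thesis
  proof (intro exI[of _ "\<delta>^16"] conjI allI impI)
    show "\<delta>^16 > 0" using \<delta>p by simp
  next
    fix N :: nat and k :: real and mu1 mu2 mt1 mt2 :: gridfun
    assume H: "N \<ge> 1 \<and> meshsize N < \<delta>^16 \<and> k < \<delta>^16 \<and>
    inX N mu1 \<and> inX N mu2 \<and> inX N mt1 \<and> inX N mt2 \<and>
    (\<forall>(i,j,l)\<in>allpts N. norm (mu1 i j l) = 1 \<and> norm (mu2 i j l) = 1) \<and>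
    norminf N mu1 + gradnorminf N mu1 \<le> Cs \<and>
    norminf N mu2 + gradnorminf N mu2 \<le> Cs \<and>
    C1 * meshsize N \<le> k \<and> k \<le> C2 * meshsize N \<and>
    norm2 N (mu1 - mt1) \<le> 2 * k powr (15/8) \<and>
    norm2 N (mu2 - mt2) \<le> 2 * k powr (15/8) \<and>
    gradnorm2 N (mu1 - mt1) \<le> 1/2 * k powr (11/8) \<and>
    gradnorm2 N (mu2 - mt2) \<le> 1/2 * k powr (11/8) \<and>
    norminf N (mu1 - mu2) \<le> 1/4 * k powr (7/8)"
    have N1: "N \<ge> 1" using H by blast
    have Np: "real N > 0" using N1 by simp
    have kC1: "C1 / real N \<le> k" and kC2: "k \<le> C2 / real N" using H by (auto simp: meshsize_def)
    have kp: "k > 0" using kC1 assms Np by (smt (verit) divide_pos_pos)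
    define x where "x = root 16 k"
    have xp: "x > 0" using kp by (simp add: x_def)
    have xk: "x^16 = k" using kp by (simp add: x_def real_root_pow_pos2)
    have xd: "x < \<delta>"
    proof (rule ccontr)
      assume "\<not> x < \<delta>"
      then have "\<delta>^16 \<le> x^16" using \<delta>p by (intro power_mono) auto
      then show False using H xk by simp
    qed
    have x1: "x \<le> 1" and xc1: "x < c1" and xK: "x * K0 \<le> 1/5"
    proof -
      show "x \<le> 1" using xd by (simp add: \<delta>_def)
      show "x < c1" using xd by (simp add: \<delta>_def)
      have "x \<le> 1/(5*K0)" using xd by (simp add: \<delta>_def)
      then show "x * K0 \<le> 1/5" using K0p by (simp add: field_simps)
    qed
    have pw: "k powr (15/8) = x^30" "k powr (11/8) = x^22" "k powr (7/8) = x^14"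
       "k powr (5/4) = x^20" "k powr (1/4) = x^4"
      using kpow[OF xp, of 30] kpow[OF xp, of 22] kpow[OF xp, of 14] kpow[OF xp, of 20] kpow[OF xp, of 4]
      unfolding xk by simp_all
    define m where "m = nat \<lfloor>c1/x\<rfloor>"
    have cx1: "c1/x \<ge> 1" using xc1 xp by simp
    have m1: "real m \<ge> 1" using cx1 by (simp add: m_def)
    have mle: "real m \<le> c1/x" using cx1 by (simp add: m_def)
    have mgt: "c1/x < real m + 1" using cx1 by (simp add: m_def)
    have mge: "c1/(2*x) \<le> real m"
    proof -
      have a: "x \<le> x * real m" using m1 xp by simp
      have b: "c1 < x * real m + x" using mgt xp by (simp add: field_simps)
      have "c1 \<le> 2 * (x * real m)" using a b by linarith
      then show ?thesis using xp by (simp add: field_simps)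
    qed
    have Nlow: "(c1/x)^16 \<le> real N"
    proof -
      have "(c1/x)^16 = C1 / k" using c1e xk by (simp add: power_divide)
      also have "\<dots> \<le> real N" using kC1 kp Np by (simp add: field_simps)
      finally show ?thesis .
    qed
    have Nup: "real N \<le> (c2/x)^16"
    proof -
      have "(c2/x)^16 = C2 / k" using c2e xk by (simp add: power_divide)
      moreover have "real N \<le> C2 / k" using kC2 kp Np by (simp add: field_simps)
      ultimately show ?thesis by simp
    qed
    have m6: "m^6 \<le> N"
    proof -
      have "real m ^ 6 \<le> real m ^ 16" using m1 by (intro power_increasing) auto
      also have "\<dots> \<le> (c1/x)^16" using mle m1 by (intro power_mono) auto
      also have "\<dots> \<le> real N" by (rule Nlow)
      finally show ?thesis by (simp flip: of_nat_power)
    qed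
    have mnat: "m \<ge> 1" using m1 by simp
    have eta: "norm (mu i j l - mt i j l) \<le> x^12/5"
      if p: "(i,j,l) \<in> interior N" and L: "norm2 N (mu - mt) \<le> 2 * x^30"
        and G: "gradnorm2 N (mu - mt) \<le> x^22/2" for mu mt i j l
    proof -
      have "norm ((mu - mt) i j l) \<le> (4 + 2 * real m) * (sqrt N * gradnorm2 N (mu - mt))
          + real N * sqrt N * norm2 N (mu - mt) / real m ^ 9"
        by (rule linf2[OF N1 p mnat m6])
      also have "\<dots> \<le> x^12/5"
        by (rule eta_bound[OF xp x1 c1p c2p m1 mle mge _ Nup gradnorm2_nonneg G norm2_nonneg L])
           (use xK in \<open>simp_all add: K0_def\<close>)
      finally show ?thesis by simp
    qed
    have pt: "norm (mu1 i j l) = 1 \<and> norm (mu2 i j l) = 1 \<and> norm (mu1 i j l - mt1 i j l) \<le> x^12/5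
       \<and> norm (mu2 i j l - mt2 i j l) \<le> x^12/5 \<and> norm (mu1 i j l - mu2 i j l) \<le> x^14/4"
      if p: "(i,j,l) \<in> interior N" for i j l
    proof (intro conjI)
      have "(i,j,l) \<in> allpts N" using p by (auto simp: interior_def allpts_def)
      then show "norm (mu1 i j l) = 1" "norm (mu2 i j l) = 1" using H by auto
      show "norm (mu1 i j l - mt1 i j l) \<le> x^12/5" by (rule eta[OF p]) (use H pw in simp_all)
      show "norm (mu2 i j l - mt2 i j l) \<le> x^12/5" by (rule eta[OF p]) (use H pw in simp_all)
      have "norm ((mu1 - mu2) i j l) \<le> norminf N (mu1 - mu2)" by (rule le_norminf[OF p])
      then show "norm (mu1 i j l - mu2 i j l) \<le> x^14/4" using H pw by simp
    qed
    have main: "\<bar>ginner N ((mu1 - mt1) - (mu1 - normalize mt1)) (mu2 - normalize mt2)\<bar>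
      \<le> x^20 * (norm2 N (mu2 - normalize mt2))^2 + x^4 * (norm2 N ((mu1 - mt1) - (mu1 - normalize mt1)))^2"
      by (rule sum_core[OF xp x1 pt])
    show "let e1 = mu1 - normalize mt1; e2 = mu2 - normalize mt2; et1 = mu1 - mt1 in
      \<bar>ginner N (et1 - e1) e2\<bar> \<le> k powr (5/4) * (norm2 N e2)^2 + k powr (1/4) * (norm2 N (et1 - e1))^2"
      unfolding Let_def pw using main .
  qed
qed

end
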